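(* Let $E$ be an infinite dimensional separable real Hilbert space and let $R\colon E\to E$ be a linear isometry. Then the map $$\Phi\colon\mathcal{W}_2(E)\to\mathcal{W}_2(E),\qquad \mu\mapsto\big(t_{m(\mu)}\circ R\circ t_{-m(\mu)}\big)_\#\mu$$ is an isometry of $\mathcal{W}_2(E)$.
   Context: $\mathcal{W}_2(E)$ is the set of Borel probability measures $\mu$ on $E$ with $\int_E\|x\|^2\,d\mu(x)<\infty$, with the distance $d_{\mathcal{W}_2}(\mu,\nu)=\big(\inf_{\pi\in\Pi(\mu,\nu)}\int_{E\times E}\|x-y\|^2\,d\pi(x,y)\big)^{1/2}$, $\Pi(\mu,\nu)$ being the set of couplings of $\mu$ and $\nu$. An isometry is a distance preserving bijection. The barycenter $m(\mu)\in E$ is the point with $\langle m(\mu),z\rangle=\int_E\langle x,z\rangle\,d\mu(x)$ for all $z\in E$. $t_v(x)=x+v$ is translation by $v$, and $g_\#\mu=\mu\circ g^{-1}$ is the push-forward. *)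

theory Defs
  imports "HOL-Probability.Probability"
begin

definition W2 :: "'a::real_normed_vector measure set" where
  "W2 = {\<mu>. prob_space \<mu> \<and> sets \<mu> = sets borel \<and>
            (\<integral>\<^sup>+ x. ennreal ((norm x)\<^sup>2) \<partial>\<mu>) < \<infinity>}"

definition couplings :: "'a::topological_space measure \<Rightarrow> 'a measure \<Rightarrow> ('a \<times> 'a) measure set" where
  "couplings \<mu> \<nu> = {\<pi>. prob_space \<pi> \<and> sets \<pi> = sets borel \<and>
                        distr \<pi> borel fst = \<mu> \<and> distr \<pi> borel snd = \<nu>}"

definition dW2 :: "'a::real_normed_vector measure \<Rightarrow> 'a measure \<Rightarrow> real" where
  "dW2 \<mu> \<nu> = sqrt (enn2real (INF \<pi>\<in>couplings \<mu> \<nu>. \<integral>\<^sup>+ p. ennreal ((norm (fst p - snd p))\<^sup>2) \<partial>\<pi>))"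

definition barycenter :: "'a::real_inner measure \<Rightarrow> 'a" where
  "barycenter \<mu> = (THE m. \<forall>z. m \<bullet> z = (\<integral> x. x \<bullet> z \<partial>\<mu>))"

definition transl :: "'a::real_vector \<Rightarrow> 'a \<Rightarrow> 'a" where
  "transl v x = x + v"

end

theory Submission
  imports Defs
begin

lemma integrableI_sequence':
  fixes f :: "'a \<Rightarrow> 'b::{real_normed_vector, complete_space, second_countable_topology}"
    and s :: "nat \<Rightarrow> 'a \<Rightarrow> 'b"
  assumes f[measurable]: "f \<in> borel_measurable M"
  assumes s: "\<And>i. Bochner_Integration.simple_bochner_integrable M (s i)"
  assumes lim: "(\<lambda>i. \<integral>\<^sup>+x. norm (f x - s i x) \<partial>M) \<longlonglongrightarrow> 0" (is "?S \<longlonglongrightarrow> 0")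
  shows "integrable M f"
proof -
  define ss where "ss = (\<lambda>n. Bochner_Integration.simple_bochner_integral M (s n))"
  have "\<exists>x::'b. ss \<longlonglongrightarrow> x"
    unfolding convergent_eq_Cauchy
  proof (rule metric_CauchyI)
    fix e :: real assume "0 < e"
    then have "0 < ennreal (e / 2)" by auto
    from order_tendstoD(2)[OF lim this]
    obtain M where M: "\<And>n. M \<le> n \<Longrightarrow> ?S n < e / 2"
      by (auto simp: eventually_sequentially)
    show "\<exists>M. \<forall>m\<ge>M. \<forall>n\<ge>M. dist (ss m) (ss n) < e"
    proof (intro exI allI impI)
      fix m n assume m: "M \<le> m" and n: "M \<le> n"
      have "?S n \<noteq> \<infinity>"
        using M[OF n] by auto
      have "norm (ss n - ss m) \<le> ?S n + ?S m"
        unfolding ss_def by (intro simple_bochner_integral_bounded s f)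
      also have "\<dots> < ennreal (e / 2) + e / 2"
        by (intro add_strict_mono M n m)
      also have "\<dots> = e" using \<open>0<e\<close> by (simp flip: ennreal_plus)
      finally show "dist (ss n) (ss m) < e"
        using \<open>0<e\<close> by (simp add: dist_norm ennreal_less_iff)
    qed
  qed
  then obtain x where "ss \<longlonglongrightarrow> x" ..
  then have "has_bochner_integral M f x"
    by (intro has_bochner_integral.intros[OF f s lim]) (simp add: ss_def)
  then show ?thesis by (rule integrable.intros)
qed

lemma integrableI_bounded':
  fixes f :: "'a \<Rightarrow> 'b::{real_normed_vector, complete_space, second_countable_topology}"
  assumes f[measurable]: "f \<in> borel_measurable M" and fin: "(\<integral>\<^sup>+x. norm (f x) \<partial>M) < \<infinity>"
  shows "integrable M f"
proof -
  from borel_measurable_implies_sequence_metric[OF f, of 0] obtain s where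
    s: "\<And>i. simple_function M (s i)" and
    pointwise: "\<And>x. x \<in> space M \<Longrightarrow> (\<lambda>i. s i x) \<longlonglongrightarrow> f x" and
    bound: "\<And>i x. x \<in> space M \<Longrightarrow> norm (s i x) \<le> 2 * norm (f x)"
    by simp metis
  show ?thesis
  proof (rule integrableI_sequence')
    { fix i
      have "(\<integral>\<^sup>+x. norm (s i x) \<partial>M) \<le> (\<integral>\<^sup>+x. ennreal (2 * norm (f x)) \<partial>M)"
        by (intro nn_integral_mono) (simp add: bound)
      also have "\<dots> = 2 * (\<integral>\<^sup>+x. ennreal (norm (f x)) \<partial>M)"
        by (simp add: ennreal_mult nn_integral_cmult)
      also have "\<dots> < top"
        using fin by (simp add: ennreal_mult_less_top)
      finally have "(\<integral>\<^sup>+x. norm (s i x) \<partial>M) < \<infinity>"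
        by simp }
    note fin_s = this
    show "\<And>i. Bochner_Integration.simple_bochner_integrable M (s i)"
      by (intro simple_bochner_integrableI_bounded s fin_s)
    show "(\<lambda>i. \<integral>\<^sup>+ x. ennreal (norm (f x - s i x)) \<partial>M) \<longlonglongrightarrow> 0"
    proof (rule nn_integral_dominated_convergence_norm)
      show "\<And>j. AE x in M. norm (s j x) \<le> 2 * norm (f x)"
        using bound by auto
      show "\<And>i. s i \<in> borel_measurable M" "(\<lambda>x. 2 * norm (f x)) \<in> borel_measurable M"
        using s by (auto intro: borel_measurable_simple_function)
      show "(\<integral>\<^sup>+ x. ennreal (2 * norm (f x)) \<partial>M) < \<infinity>"
        using fin by (simp add: nn_integral_cmult ennreal_mult ennreal_mult_less_top)
      show "AE x in M. (\<lambda>i. s i x) \<longlonglongrightarrow> f x"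
        using pointwise by auto
    qed fact
  qed fact
qed

lemma W2_D:
  fixes \<mu> :: "'a::{real_inner, complete_space, second_countable_topology} measure"
  assumes "\<mu> \<in> W2"
  shows W2_prob: "prob_space \<mu>" and W2_sets: "sets \<mu> = sets borel"
    and W2_sq: "integrable \<mu> (\<lambda>x. (norm x)\<^sup>2)"
    and W2_id: "integrable \<mu> (\<lambda>x. x)"
    and W2_inner: "integrable \<mu> (\<lambda>x. x \<bullet> z)"
proof -
  show P: "prob_space \<mu>" and S: "sets \<mu> = sets borel" using assms by (auto simp: W2_def)
  have fin: "(\<integral>\<^sup>+ x. ennreal ((norm x)\<^sup>2) \<partial>\<mu>) < \<infinity>" using assms by (auto simp: W2_def)
  have meas: "f \<in> borel_measurable \<mu>" if "f \<in> borel_measurable borel" for f :: "'a \<Rightarrow> 'c::topological_space"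
    using that measurable_cong_sets[OF S refl] by blast
  show sq: "integrable \<mu> (\<lambda>x. (norm x)\<^sup>2)"
  proof (rule integrableI_bounded)
    show "(\<lambda>x. (norm x)\<^sup>2) \<in> borel_measurable \<mu>" by (auto intro!: meas)
    show "(\<integral>\<^sup>+ x. ennreal (norm ((norm x)\<^sup>2)) \<partial>\<mu>) < \<infinity>" using fin by simp
  qed
  interpret prob_space \<mu> by fact
  have "integrable \<mu> (\<lambda>x. 1 + (norm x)\<^sup>2)" using sq by auto
  then have "(\<integral>\<^sup>+ x. ennreal (1 + (norm x)\<^sup>2) \<partial>\<mu>) < \<infinity>"
    by (subst nn_integral_eq_integral) auto
  moreover have "(\<integral>\<^sup>+ x. ennreal (norm x) \<partial>\<mu>) \<le> (\<integral>\<^sup>+ x. ennreal (1 + (norm x)\<^sup>2) \<partial>\<mu>)"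
  proof (rule nn_integral_mono)
    fix x :: 'a
    have "norm x \<le> 1 + (norm x)\<^sup>2"
    proof -
      have "0 \<le> (norm x - 1/2)\<^sup>2" by simp
      then show ?thesis by (simp add: power2_eq_square algebra_simps)
    qed
    then show "ennreal (norm x) \<le> ennreal (1 + (norm x)\<^sup>2)" by (rule ennreal_leI)
  qed
  ultimately have "(\<integral>\<^sup>+ x. ennreal (norm x) \<partial>\<mu>) < \<infinity>" by (meson order.strict_trans1)
  then show I: "integrable \<mu> (\<lambda>x. x)"
    by (intro integrableI_bounded') (auto intro!: meas)
  show "integrable \<mu> (\<lambda>x. x \<bullet> z)" using I by (rule integrable_inner_left)
qed

lemma barycenter_eqI:
  fixes m :: "'a::real_inner"
  assumes "\<And>z. m \<bullet> z = (\<integral> x. x \<bullet> z \<partial>\<mu>)"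
  shows "barycenter \<mu> = m"
  unfolding barycenter_def
proof (rule the_equality)
  show "\<forall>z. m \<bullet> z = (\<integral> x. x \<bullet> z \<partial>\<mu>)" using assms by auto
  fix m' assume "\<forall>z. m' \<bullet> z = (\<integral> x. x \<bullet> z \<partial>\<mu>)"
  then have "(m' - m) \<bullet> z = 0" for z using assms by (simp add: inner_diff_left)
  from this[of "m' - m"] show "m' = m" by simp
qed

lemma barycenter_W2:
  fixes \<mu> :: "'a::{real_inner, complete_space, second_countable_topology} measure"
  assumes "\<mu> \<in> W2"
  shows "barycenter \<mu> \<bullet> z = (\<integral> x. x \<bullet> z \<partial>\<mu>)"
proof -
  have "barycenter \<mu> = (\<integral> x. x \<partial>\<mu>)"
    by (rule barycenter_eqI) (simp add: W2_id[OF assms])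
  then show ?thesis by (simp add: W2_id[OF assms])
qed


definition PhiR :: "('a::real_inner \<Rightarrow> 'a) \<Rightarrow> 'a measure \<Rightarrow> 'a measure" where
  "PhiR R \<mu> = distr \<mu> borel (\<lambda>x. R (x - barycenter \<mu>) + barycenter \<mu>)"

definition cost :: "('a::real_normed_vector \<times> 'a) measure \<Rightarrow> ennreal" where
  "cost \<pi> = (\<integral>\<^sup>+ p. ennreal ((norm (fst p - snd p))\<^sup>2) \<partial>\<pi>)"

lemma meas_W2:
  fixes \<mu> :: "'a::{real_inner, complete_space, second_countable_topology} measure"
  assumes "\<mu> \<in> W2" "f \<in> borel_measurable borel"
  shows "f \<in> borel_measurable \<mu>"
  using assms measurable_cong_sets[OF W2_sets[OF assms(1)] refl] by blast

locale lin_iso =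
  fixes R :: "'a::{real_inner, complete_space, second_countable_topology} \<Rightarrow> 'a"
  assumes lin: "linear R" and bijR: "bij R" and normR: "\<And>x. norm (R x) = norm x"
begin

lemma Radd: "R (x + y) = R x + R y" using lin by (rule linear_add)
lemma Rdiff: "R (x - y) = R x - R y" using lin by (rule linear_diff)

lemma Rinner: "R x \<bullet> R y = x \<bullet> y"
proof -
  have "(norm (R (x + y)))\<^sup>2 = (norm (x + y))\<^sup>2" by (simp add: normR)
  then have "(R x + R y) \<bullet> (R x + R y) = (x + y) \<bullet> (x + y)"
    by (simp add: Radd power2_norm_eq_inner)
  moreover have "R x \<bullet> R x = x \<bullet> x" "R y \<bullet> R y = y \<bullet> y"
    by (metis normR power2_norm_eq_inner)+
  ultimately show ?thesis
    by (simp add: inner_add_left inner_add_right inner_commute)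
qed

lemma Rbl: "bounded_linear R"
  by (rule bounded_linear_intro[where K=1]) (auto simp: Radd normR linear_scale[OF lin])

lemma Rcont[continuous_intros]: "continuous_on S f \<Longrightarrow> continuous_on S (\<lambda>x. R (f x))"
  by (rule bounded_linear.continuous_on[OF Rbl])

lemma gmeas: "(\<lambda>x. R (x - m) + m) \<in> borel_measurable borel"
  by (intro borel_measurable_continuous_onI continuous_intros)

lemma norm_expand:
  assumes "R e = d"
  shows "(norm (R u + d))\<^sup>2 = (norm (u + d))\<^sup>2 + 2 * (u \<bullet> (e - d))"
proof -
  have "R u \<bullet> d = u \<bullet> e" using assms Rinner by metis
  moreover have "R u \<bullet> R u = u \<bullet> u" by (rule Rinner)
  ultimately show ?thesis
    by (simp add: power2_norm_eq_inner inner_add_left inner_add_right inner_diff_right inner_commute algebra_simps)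
qed

lemma Phi_W2:
  assumes W: "\<mu> \<in> W2"
  shows "PhiR R \<mu> \<in> W2"
proof -
  define m where "m = barycenter \<mu>"
  define g where "g = (\<lambda>x. R (x - m) + m)"
  have gm: "g \<in> measurable \<mu> borel" unfolding g_def by (rule meas_W2[OF W gmeas])
  interpret prob_space \<mu> by (rule W2_prob[OF W])
  have P: "PhiR R \<mu> = distr \<mu> borel g" by (simp add: PhiR_def g_def m_def)
  have "prob_space (distr \<mu> borel g)" by (rule prob_space_distr[OF gm])
  moreover have "sets (distr \<mu> borel g) = sets borel" by simp
  moreover have "(\<integral>\<^sup>+ y. ennreal ((norm y)\<^sup>2) \<partial>distr \<mu> borel g) < \<infinity>"
  proof -
    have "(\<integral>\<^sup>+ y. ennreal ((norm y)\<^sup>2) \<partial>distr \<mu> borel g) = (\<integral>\<^sup>+ x. ennreal ((norm (g x))\<^sup>2) \<partial>\<mu>)"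
      by (rule nn_integral_distr[OF gm]) (unfold measurable_distr_eq1, measurable)
    also have "\<dots> \<le> (\<integral>\<^sup>+ x. ennreal (2 * (norm x)\<^sup>2 + 8 * (norm m)\<^sup>2) \<partial>\<mu>)"
    proof (rule nn_integral_mono)
      fix x
      have "norm (g x) \<le> norm (R (x - m)) + norm m" unfolding g_def by (rule norm_triangle_ineq)
      also have "\<dots> \<le> norm x + 2 * norm m" using norm_triangle_ineq4[of x m] by (simp add: normR)
      finally have h: "norm (g x) \<le> norm x + 2 * norm m" .
      have "(norm (g x))\<^sup>2 \<le> (norm x + 2 * norm m)\<^sup>2" by (rule power_mono[OF h]) simp
      also have "\<dots> \<le> 2 * (norm x)\<^sup>2 + 8 * (norm m)\<^sup>2"
      proof -
        have "0 \<le> (norm x - 2 * norm m)\<^sup>2" by simp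
        then show ?thesis by (simp add: power2_eq_square algebra_simps)
      qed
      finally show "ennreal ((norm (g x))\<^sup>2) \<le> ennreal (2 * (norm x)\<^sup>2 + 8 * (norm m)\<^sup>2)"
        by (rule ennreal_leI)
    qed
    also have "\<dots> < \<infinity>"
      using W2_sq[OF W] by (subst nn_integral_eq_integral) auto
    finally show ?thesis .
  qed
  ultimately show ?thesis unfolding P W2_def by blast
qed

lemma Phi_bary:
  assumes W: "\<mu> \<in> W2"
  shows "barycenter (PhiR R \<mu>) = barycenter \<mu>"
proof -
  define m where "m = barycenter \<mu>"
  define g where "g = (\<lambda>x. R (x - m) + m)"
  have gm: "g \<in> measurable \<mu> borel" unfolding g_def by (rule meas_W2[OF W gmeas])
  interpret prob_space \<mu> by (rule W2_prob[OF W])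
  have P: "PhiR R \<mu> = distr \<mu> borel g" by (simp add: PhiR_def g_def m_def)
  show ?thesis
    unfolding P m_def[symmetric]
  proof (rule barycenter_eqI)
    fix z
    obtain e where e: "R e = z" using bijR by (metis bij_pointE)
    have "(\<integral> y. y \<bullet> z \<partial>distr \<mu> borel g) = (\<integral> x. g x \<bullet> z \<partial>\<mu>)"
      by (rule integral_distr[OF gm]) (intro borel_measurable_continuous_onI continuous_intros)
    also have "\<dots> = (\<integral> x. x \<bullet> e - m \<bullet> e + m \<bullet> z \<partial>\<mu>)"
      by (rule Bochner_Integration.integral_cong) (auto simp: g_def inner_add_left e[symmetric] Rinner inner_diff_left)
    also have "\<dots> = (\<integral> x. x \<bullet> e \<partial>\<mu>) - m \<bullet> e + m \<bullet> z"
      using W2_inner[OF W, of e] by (simp add: prob_space)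
    also have "\<dots> = m \<bullet> z"
      using barycenter_W2[OF W, of e] by (simp add: m_def)
    finally show "m \<bullet> z = (\<integral> y. y \<bullet> z \<partial>distr \<mu> borel g)" by simp
  qed
qed


lemma Rinv_R: "inv R (R x) = x" using bijR by (simp add: bij_is_inj)
lemma R_Rinv: "R (inv R x) = x" using bijR by (simp add: bij_is_surj surj_f_inv_f)

lemma inv_lin_iso: "lin_iso (inv R)"
proof (rule lin_iso.intro)
  show "linear (inv R)"
  proof (rule linearI)
    fix x y
    have "inv R (x + y) = inv R (R (inv R x) + R (inv R y))" by (simp add: R_Rinv)
    also have "\<dots> = inv R x + inv R y" by (simp add: Radd[symmetric] Rinv_R)
    finally show "inv R (x + y) = inv R x + inv R y" .
  next
    fix c x
    have "inv R (c *\<^sub>R x) = inv R (c *\<^sub>R R (inv R x))" by (simp add: R_Rinv)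
    also have "\<dots> = c *\<^sub>R inv R x" by (simp add: linear_scale[OF lin, symmetric] Rinv_R)
    finally show "inv R (c *\<^sub>R x) = c *\<^sub>R inv R x" .
  qed
  show "bij (inv R)" using bijR by (rule bij_imp_bij_inv)
  fix x show "norm (inv R x) = norm x" by (metis normR R_Rinv)
qed

lemma Phi_inv:
  assumes W: "\<mu> \<in> W2"
  shows "PhiR (inv R) (PhiR R \<mu>) = \<mu>"
proof -
  interpret I: lin_iso "inv R" by (rule inv_lin_iso)
  define m where "m = barycenter \<mu>"
  have gm: "(\<lambda>x. R (x - m) + m) \<in> measurable \<mu> borel" by (rule meas_W2[OF W gmeas])
  have "PhiR (inv R) (PhiR R \<mu>) = distr (distr \<mu> borel (\<lambda>x. R (x - m) + m)) borel (\<lambda>y. inv R (y - m) + m)"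
    unfolding PhiR_def[of "inv R"] Phi_bary[OF W] by (simp add: PhiR_def m_def)
  also have "\<dots> = distr \<mu> borel ((\<lambda>y. inv R (y - m) + m) \<circ> (\<lambda>x. R (x - m) + m))"
    by (rule distr_distr[OF I.gmeas gm])
  also have "(\<lambda>y. inv R (y - m) + m) \<circ> (\<lambda>x. R (x - m) + m) = (\<lambda>x. x)"
    by (simp add: fun_eq_iff Rinv_R)
  also have "distr \<mu> borel (\<lambda>x. x) = \<mu>"
    by (rule distr_id2) (simp add: W2_sets[OF W])
  finally show ?thesis .
qed

lemma coupling_fst:
  fixes f :: "'a \<Rightarrow> real"
  assumes \<pi>: "\<pi> \<in> couplings \<mu> \<nu>" and f: "f \<in> borel_measurable borel" and i: "integrable \<mu> f"
  shows "integrable \<pi> (\<lambda>p. f (fst p))" "(\<integral> p. f (fst p) \<partial>\<pi>) = (\<integral> x. f x \<partial>\<mu>)"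
proof -
  have S: "sets \<pi> = sets borel" and D: "distr \<pi> borel fst = \<mu>" using \<pi> by (auto simp: couplings_def)
  have fm: "fst \<in> measurable \<pi> borel"
    using measurable_cong_sets[OF S refl] borel_measurable_continuous_onI[OF continuous_on_fst[OF continuous_on_id]]
    by blast
  show "integrable \<pi> (\<lambda>p. f (fst p))"
    using integrable_distr_eq[OF fm f] i D by simp
  show "(\<integral> p. f (fst p) \<partial>\<pi>) = (\<integral> x. f x \<partial>\<mu>)"
    using integral_distr[OF fm f] D by simp
qed

lemma coupling_snd:
  fixes f :: "'a \<Rightarrow> real"
  assumes \<pi>: "\<pi> \<in> couplings \<mu> \<nu>" and f: "f \<in> borel_measurable borel" and i: "integrable \<nu> f"
  shows "integrable \<pi> (\<lambda>p. f (snd p))" "(\<integral> p. f (snd p) \<partial>\<pi>) = (\<integral> x. f x \<partial>\<nu>)"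
proof -
  have S: "sets \<pi> = sets borel" and D: "distr \<pi> borel snd = \<nu>" using \<pi> by (auto simp: couplings_def)
  have fm: "snd \<in> measurable \<pi> borel"
    using measurable_cong_sets[OF S refl] borel_measurable_continuous_onI[OF continuous_on_snd[OF continuous_on_id]]
    by blast
  show "integrable \<pi> (\<lambda>p. f (snd p))"
    using integrable_distr_eq[OF fm f] i D by simp
  show "(\<integral> p. f (snd p) \<partial>\<pi>) = (\<integral> x. f x \<partial>\<nu>)"
    using integral_distr[OF fm f] D by simp
qed


lemma cost_le:
  assumes Wm: "\<mu> \<in> W2" and Wn: "\<nu> \<in> W2"
  shows "(INF \<pi>\<in>couplings (PhiR R \<mu>) (PhiR R \<nu>). cost \<pi>) \<le> (INF \<pi>\<in>couplings \<mu> \<nu>. cost \<pi>)"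
proof (rule INF_mono)
  fix \<pi> assume \<pi>: "\<pi> \<in> couplings \<mu> \<nu>"
  have S: "sets \<pi> = sets borel" and P: "prob_space \<pi>"
    and D1: "distr \<pi> borel fst = \<mu>" and D2: "distr \<pi> borel snd = \<nu>"
    using \<pi> by (auto simp: couplings_def)
  have mpi: "f \<in> measurable \<pi> N" if "f \<in> measurable borel N" for f :: "'a \<times> 'a \<Rightarrow> 'c" and N
    using that measurable_cong_sets[OF S refl] by blast
  define a where "a = barycenter \<mu>"
  define b where "b = barycenter \<nu>"
  define gm where "gm = (\<lambda>x. R (x - a) + a)"
  define gn where "gn = (\<lambda>x. R (x - b) + b)"
  define h where "h = (\<lambda>p. (gm (fst p), gn (snd p)))"
  have hb: "h \<in> borel_measurable borel" unfolding h_def gm_def gn_def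
    by (intro borel_measurable_continuous_onI continuous_intros)
  have hm: "h \<in> measurable \<pi> borel" by (rule mpi[OF hb])
  have fstb: "fst \<in> measurable (borel :: ('a \<times> 'a) measure) borel"
    by (intro borel_measurable_continuous_onI continuous_intros)
  have sndb: "snd \<in> measurable (borel :: ('a \<times> 'a) measure) borel"
    by (intro borel_measurable_continuous_onI continuous_intros)
  have gmb: "gm \<in> measurable borel borel" unfolding gm_def by (rule gmeas)
  have gnb: "gn \<in> measurable borel borel" unfolding gn_def by (rule gmeas)
  define \<pi>' where "\<pi>' = distr \<pi> borel h"
  have "\<pi>' \<in> couplings (PhiR R \<mu>) (PhiR R \<nu>)"
    unfolding couplings_def
  proof (intro CollectI conjI)
    show "prob_space \<pi>'" unfolding \<pi>'_def by (rule prob_space.prob_space_distr[OF P hm])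
    show "sets \<pi>' = sets borel" unfolding \<pi>'_def by simp
    have "distr \<pi>' borel fst = distr \<pi> borel (fst \<circ> h)"
      unfolding \<pi>'_def by (rule distr_distr[OF fstb hm])
    also have "fst \<circ> h = gm \<circ> fst" by (auto simp: h_def)
    also have "distr \<pi> borel (gm \<circ> fst) = distr (distr \<pi> borel fst) borel gm"
      by (rule distr_distr[OF gmb mpi[OF fstb], symmetric])
    also have "\<dots> = PhiR R \<mu>" by (simp add: D1 PhiR_def gm_def a_def)
    finally show "distr \<pi>' borel fst = PhiR R \<mu>" .
    have "distr \<pi>' borel snd = distr \<pi> borel (snd \<circ> h)"
      unfolding \<pi>'_def by (rule distr_distr[OF sndb hm])
    also have "snd \<circ> h = gn \<circ> snd" by (auto simp: h_def)
    also have "distr \<pi> borel (gn \<circ> snd) = distr (distr \<pi> borel snd) borel gn"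
      by (rule distr_distr[OF gnb mpi[OF sndb], symmetric])
    also have "\<dots> = PhiR R \<nu>" by (simp add: D2 PhiR_def gn_def b_def)
    finally show "distr \<pi>' borel snd = PhiR R \<nu>" .
  qed
  moreover have "cost \<pi>' \<le> cost \<pi>"
  proof -
    define F where "F = (\<lambda>p. (norm (gm (fst p) - gn (snd p)))\<^sup>2)"
    define G where "G = (\<lambda>p::'a\<times>'a. (norm (fst p - snd p))\<^sup>2)"
    have Gb: "G \<in> borel_measurable borel" unfolding G_def
      by (intro borel_measurable_continuous_onI continuous_intros)
    have Fb: "F \<in> borel_measurable borel" unfolding F_def gm_def gn_def
      by (intro borel_measurable_continuous_onI continuous_intros)
    have [measurable]: "(\<lambda>p. ennreal (G p)) \<in> borel_measurable borel" using Gb by measurable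
    have "cost \<pi>' = (\<integral>\<^sup>+ p. ennreal (G p) \<partial>\<pi>')" by (simp add: cost_def G_def)
    also have "\<dots> = (\<integral>\<^sup>+ p. ennreal (G (h p)) \<partial>\<pi>)"
      unfolding \<pi>'_def by (rule nn_integral_distr[OF hm]) (unfold measurable_distr_eq1, measurable)
    also have "(\<lambda>p. G (h p)) = F" by (simp add: fun_eq_iff F_def G_def h_def)
    finally have c1: "cost \<pi>' = (\<integral>\<^sup>+ p. ennreal (F p) \<partial>\<pi>)" .
    have c2: "cost \<pi> = (\<integral>\<^sup>+ p. ennreal (G p) \<partial>\<pi>)" by (simp add: cost_def G_def)
    define d where "d = a - b"
    obtain e where e: "R e = d" using bijR by (metis bij_pointE)
    define w where "w = e - d"
    have Fid: "F p = G p + 2 * (fst p \<bullet> w - snd p \<bullet> w - d \<bullet> w)" for p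
    proof -
      obtain x y where p: "p = (x, y)" by (cases p)
      have "gm x - gn y = R (x - y - d) + d"
        by (simp add: gm_def gn_def d_def Rdiff Radd algebra_simps)
      then have "F p = (norm (R (x - y - d) + d))\<^sup>2" by (simp add: F_def p)
      also have "\<dots> = (norm (x - y - d + d))\<^sup>2 + 2 * ((x - y - d) \<bullet> w)"
        unfolding w_def by (rule norm_expand[OF e])
      also have "\<dots> = G p + 2 * (fst p \<bullet> w - snd p \<bullet> w - d \<bullet> w)"
        by (simp add: G_def p inner_diff_left)
      finally show ?thesis .
    qed
    have i1: "integrable \<pi> (\<lambda>p. fst p \<bullet> w)" and e1: "(\<integral> p. fst p \<bullet> w \<partial>\<pi>) = a \<bullet> w"
      using coupling_fst[OF \<pi>, of "\<lambda>x. x \<bullet> w"] W2_inner[OF Wm, of w] barycenter_W2[OF Wm, of w]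
      by (auto simp: a_def intro: borel_measurable_continuous_onI continuous_intros)
    have i2: "integrable \<pi> (\<lambda>p. snd p \<bullet> w)" and e2: "(\<integral> p. snd p \<bullet> w \<partial>\<pi>) = b \<bullet> w"
      using coupling_snd[OF \<pi>, of "\<lambda>x. x \<bullet> w"] W2_inner[OF Wn, of w] barycenter_W2[OF Wn, of w]
      by (auto simp: b_def intro: borel_measurable_continuous_onI continuous_intros)
    have i3: "integrable \<pi> (\<lambda>p. (norm (fst p))\<^sup>2)"
      using coupling_fst[OF \<pi>, of "\<lambda>x. (norm x)\<^sup>2"] W2_sq[OF Wm]
      by (auto intro: borel_measurable_continuous_onI continuous_intros)
    have i4: "integrable \<pi> (\<lambda>p. (norm (snd p))\<^sup>2)"
      using coupling_snd[OF \<pi>, of "\<lambda>x. (norm x)\<^sup>2"] W2_sq[OF Wn]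
      by (auto intro: borel_measurable_continuous_onI continuous_intros)
    interpret P: prob_space \<pi> by (rule P)
    have iG: "integrable \<pi> G"
    proof (rule Bochner_Integration.integrable_bound)
      show "integrable \<pi> (\<lambda>p. 2 * (norm (fst p))\<^sup>2 + 2 * (norm (snd p))\<^sup>2)" using i3 i4 by simp
      show "G \<in> borel_measurable \<pi>" by (rule mpi[OF Gb])
      show "AE p in \<pi>. norm (G p) \<le> norm (2 * (norm (fst p))\<^sup>2 + 2 * (norm (snd p))\<^sup>2)"
      proof (rule AE_I2)
        fix p :: "'a \<times> 'a"
        have t: "norm (fst p - snd p) \<le> norm (fst p) + norm (snd p)" by (rule norm_triangle_ineq4)
        have "G p \<le> (norm (fst p) + norm (snd p))\<^sup>2" unfolding G_def by (rule power_mono[OF t]) simp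
        also have "\<dots> \<le> 2 * (norm (fst p))\<^sup>2 + 2 * (norm (snd p))\<^sup>2"
        proof -
          have "0 \<le> (norm (fst p) - norm (snd p))\<^sup>2" by simp
          then show ?thesis by (simp add: power2_eq_square algebra_simps)
        qed
        finally show "norm (G p) \<le> norm (2 * (norm (fst p))\<^sup>2 + 2 * (norm (snd p))\<^sup>2)"
          by (simp add: G_def)
      qed
    qed
    have Feq: "F = (\<lambda>p. G p + 2 * (fst p \<bullet> w - snd p \<bullet> w - d \<bullet> w))" using Fid by (simp add: fun_eq_iff)
    have iF: "integrable \<pi> F" unfolding Feq using iG i1 i2 by simp
    have "(\<integral> p. F p \<partial>\<pi>) = (\<integral> p. G p \<partial>\<pi>) + 2 * ((\<integral> p. fst p \<bullet> w \<partial>\<pi>) - (\<integral> p. snd p \<bullet> w \<partial>\<pi>) - d \<bullet> w)"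
      unfolding Feq using iG i1 i2 by (simp add: P.prob_space)
    also have "\<dots> = (\<integral> p. G p \<partial>\<pi>)" by (simp add: e1 e2 d_def inner_diff_left)
    finally have IE: "(\<integral> p. F p \<partial>\<pi>) = (\<integral> p. G p \<partial>\<pi>)" .
    have "(\<integral>\<^sup>+ p. ennreal (F p) \<partial>\<pi>) = ennreal (\<integral> p. F p \<partial>\<pi>)"
      by (rule nn_integral_eq_integral[OF iF]) (simp add: F_def)
    also have "\<dots> = (\<integral>\<^sup>+ p. ennreal (G p) \<partial>\<pi>)"
      unfolding IE by (rule nn_integral_eq_integral[OF iG, symmetric]) (simp add: G_def)
    finally show ?thesis using c1 c2 by simp
  qed
  ultimately show "\<exists>\<pi>'\<in>couplings (PhiR R \<mu>) (PhiR R \<nu>). cost \<pi>' \<le> cost \<pi>" by blast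
qed

end


theorem corollary3p14:
  fixes R :: "'a::{real_inner, complete_space, second_countable_topology} \<Rightarrow> 'a"
  assumes inf_dim: "\<nexists>B::'a set. finite B \<and> span B = UNIV"
    and lin: "linear R"
    and iso: "bij R" "\<And>x y. dist (R x) (R y) = dist x y"
  defines "\<Phi> \<equiv> (\<lambda>\<mu>. distr \<mu> borel
             (transl (barycenter \<mu>) \<circ> R \<circ> transl (- barycenter \<mu>)))"
  shows "bij_betw \<Phi> W2 W2 \<and> (\<forall>\<mu>\<in>W2. \<forall>\<nu>\<in>W2. dW2 (\<Phi> \<mu>) (\<Phi> \<nu>) = dW2 \<mu> \<nu>)"
proof -
  have R0: "R 0 = 0" using lin by (rule linear_0)
  have nR: "norm (R x) = norm x" for x using iso(2)[of x 0] R0 by (simp add: dist_norm)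
  interpret L: lin_iso R using lin iso(1) nR by (rule lin_iso.intro)
  interpret I: lin_iso "inv R" by (rule L.inv_lin_iso)
  have PhiE: "\<Phi> = PhiR R" unfolding \<Phi>_def PhiR_def
    by (simp add: fun_eq_iff transl_def comp_def)
  have invinv: "inv (inv R) = R" using iso(1) by (rule inv_inv_eq)
  have bk: "PhiR R (PhiR (inv R) \<nu>) = \<nu>" if "\<nu> \<in> W2" for \<nu>
    using I.Phi_inv[OF that] by (simp add: invinv)
  have bij: "bij_betw \<Phi> W2 W2"
    unfolding PhiE
    by (rule bij_betwI[where g = "PhiR (inv R)"])
       (auto simp: L.Phi_W2 I.Phi_W2 L.Phi_inv bk)
  have eq: "dW2 (\<Phi> \<mu>) (\<Phi> \<nu>) = dW2 \<mu> \<nu>" if m: "\<mu> \<in> W2" and n: "\<nu> \<in> W2" for \<mu> \<nu>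
  proof -
    have le1: "(INF \<pi>\<in>couplings (PhiR R \<mu>) (PhiR R \<nu>). cost \<pi>) \<le> (INF \<pi>\<in>couplings \<mu> \<nu>. cost \<pi>)"
      by (rule L.cost_le[OF m n])
    have "(INF \<pi>\<in>couplings \<mu> \<nu>. cost \<pi>) =
          (INF \<pi>\<in>couplings (PhiR (inv R) (PhiR R \<mu>)) (PhiR (inv R) (PhiR R \<nu>)). cost \<pi>)"
      by (simp add: L.Phi_inv m n)
    also have "\<dots> \<le> (INF \<pi>\<in>couplings (PhiR R \<mu>) (PhiR R \<nu>). cost \<pi>)"
      by (rule I.cost_le[OF L.Phi_W2[OF m] L.Phi_W2[OF n]])
    finally have "(INF \<pi>\<in>couplings (PhiR R \<mu>) (PhiR R \<nu>). cost \<pi>) = (INF \<pi>\<in>couplings \<mu> \<nu>. cost \<pi>)"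
      using le1 by (rule antisym[rotated])
    then show ?thesis unfolding PhiE dW2_def cost_def by simp
  qed
  show ?thesis using bij eq by blast
qed

end
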